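(* Let $0<\Delta\le1$ and $T=\frac{\lambda_1}{\Delta}\ln\frac{1}{\Delta}$. There exist constants $C_0,C_1>0$, independent of $P$ and $\Delta$, such that for all $P>0$ the quantizer $q_r$ with these parameters satisfies $$\mathbb{E}[r_{\rm loss}]\le\log_2(1+C_0P\Delta)\le C_1P\Delta.$$
   Context: $H_1,H_2$ are independent exponential random variables with means $\lambda_1\ge\lambda_2>0$ (density $e^{-x/\lambda_i}/\lambda_i$, $x>0$); $P>0$ is the total power. For $a\ge b\ge0$ with $a>0$ let $A(a,b)=\frac{2b}{\sqrt{(a+b)^2+4ab^2P}+a+b}$. Full-CSI maximum minimum rate: $r_{\max}=\log_2(1+PH_1A(H_1,H_2))$ if $H_1\ge H_2$ and $r_{\max}=\log_2(1+PH_2A(H_2,H_1))$ if $H_1<H_2$. Quantizer with parameters $\Delta>0$, $T\ge0$: $q_r(x)=\lfloor x/\Delta\rfloor\Delta$ for $x\le T\Delta$, $q_r(x)=T\Delta$ for $x>T\Delta$. Let $a_i=q_r(H_i)$; if $a_1\ge a_2$ let $(s,w)=(1,2)$, otherwise $(s,w)=(2,1)$. $\alpha_q=A(a_s,a_w)$ if $a_1,a_2>0$, else $\alpha_q=0$. Adapted rates: $r_{s,q}=\log_2(1+P\alpha_qa_s)$, $r_{w,q}=\log_2\big(1+\frac{Pa_w(1-\alpha_q)}{Pa_w\alpha_q+1}\big)$. Rate loss: $r_{\rm loss}=r_{\max}-\min\{r_{1,q},r_{2,q}\}$. *)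

theory Defs
  imports "HOL-Probability.Probability"
begin

definition Acoef :: "real \<Rightarrow> real \<Rightarrow> real \<Rightarrow> real" where
  "Acoef P a b = 2 * b / (sqrt ((a + b)^2 + 4 * a * b^2 * P) + a + b)"

definition rmax :: "real \<Rightarrow> real \<Rightarrow> real \<Rightarrow> real" where
  "rmax P h1 h2 =
     (if h1 \<ge> h2 then log 2 (1 + P * h1 * Acoef P h1 h2)
      else log 2 (1 + P * h2 * Acoef P h2 h1))"

definition qr :: "real \<Rightarrow> real \<Rightarrow> real \<Rightarrow> real" where
  "qr \<Delta> T x = (if x \<le> T * \<Delta> then of_int \<lfloor>x / \<Delta>\<rfloor> * \<Delta> else T * \<Delta>)"

definition rloss :: "real \<Rightarrow> real \<Rightarrow> real \<Rightarrow> real \<Rightarrow> real \<Rightarrow> real" where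
  "rloss P \<Delta> T h1 h2 =
     (let a1 = qr \<Delta> T h1; a2 = qr \<Delta> T h2;
          as = (if a1 \<ge> a2 then a1 else a2);
          aw = (if a1 \<ge> a2 then a2 else a1);
          \<alpha> = (if a1 > 0 \<and> a2 > 0 then Acoef P as aw else 0);
          rs = log 2 (1 + P * \<alpha> * as);
          rw = log 2 (1 + P * aw * (1 - \<alpha>) / (P * aw * \<alpha> + 1))
      in rmax P h1 h2 - min rs rw)"

text \<open>Joint law of (H1,H2): independent exponentials with means l1, l2.\<close>
definition chan_measure :: "real \<Rightarrow> real \<Rightarrow> (real \<times> real) measure" where
  "chan_measure l1 l2 = density (lborel \<Otimes>\<^sub>M lborel)
     (\<lambda>(x, y). ennreal (exponential_density (1 / l1) x * exponential_density (1 / l2) y))"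

end

theory Submission
  imports Defs
begin


definition uu :: "real \<Rightarrow> real \<Rightarrow> real \<Rightarrow> real" where
  "uu P a b = P * a * Acoef P a b"

lemma sqrt_ge: assumes "P \<ge> 0" "a \<ge> 0" "b \<ge> 0"
  shows "sqrt ((a + b)^2 + 4 * a * b^2 * P) \<ge> a + b"
proof -
  have "(a+b)^2 \<le> (a + b)^2 + 4 * a * b^2 * P" using assms by simp
  hence "sqrt ((a+b)^2) \<le> sqrt ((a + b)^2 + 4 * a * b^2 * P)" by (rule real_sqrt_le_mono)
  thus ?thesis using assms by simp
qed

lemma Acoef_nonneg: "P \<ge> 0 \<Longrightarrow> a \<ge> 0 \<Longrightarrow> b \<ge> 0 \<Longrightarrow> Acoef P a b \<ge> 0"
  unfolding Acoef_def by simp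

lemma Acoef_le1: assumes "P \<ge> 0" "a \<ge> 0" "b \<ge> 0" shows "Acoef P a b \<le> 1"
proof -
  have s: "sqrt ((a + b)^2 + 4 * a * b^2 * P) \<ge> a + b" using sqrt_ge assms by blast
  show ?thesis
  proof (cases "b = 0")
    case True thus ?thesis by (simp add: Acoef_def)
  next
    case False
    hence "sqrt ((a + b)^2 + 4 * a * b^2 * P) + a + b > 0" using s assms by linarith
    thus ?thesis unfolding Acoef_def using s assms by (simp add: divide_le_eq)
  qed
qed

lemma Acoef_quad: assumes "P > 0" "a > 0" "b > 0"
  shows "P * a * b * (Acoef P a b)^2 + (a + b) * Acoef P a b = b"
proof -
  define s where "s = sqrt ((a + b)^2 + 4 * a * b^2 * P)"
  have s2: "s^2 = (a + b)^2 + 4 * a * b^2 * P" unfolding s_def using assms by simp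
  have sg: "s \<ge> a + b" unfolding s_def using sqrt_ge assms by simp
  have dpos: "s + a + b > 0" using sg assms by linarith
  have A: "Acoef P a b = 2 * b / (s + a + b)" unfolding Acoef_def s_def by simp
  have "P * a * b * (2 * b)^2 + (a + b) * (2 * b) * (s + a + b) = b * (s + a + b)^2"
    using s2 by (simp add: power2_eq_square algebra_simps)
  hence key: "P * a * b * (2 * b)^2 + (a + b) * (2 * b) * (s + a + b) = b * (s + a + b)^2" .
  define d where "d = s + a + b"
  have d0: "d > 0" using dpos d_def by simp
  have "P*a*b*(2*b/d)^2 + (a+b)*(2*b/d) = (P*a*b*(2*b)^2 + (a+b)*(2*b)*d)/d^2"
    using d0 by (simp add: field_simps power2_eq_square)
  also have "\<dots> = b * d^2 / d^2" using key d_def by simp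
  also have "\<dots> = b" using d0 by simp
  finally show ?thesis unfolding A d_def .
qed

lemma uu_eq: assumes "P > 0" "a > 0" "b > 0"
  shows "uu P a b * uu P a b + uu P a b + uu P a b * a / b = P * a"
proof -
  define \<alpha> where "\<alpha> = Acoef P a b"
  have q: "P * a * b * \<alpha>^2 + (a + b) * \<alpha> = b" unfolding \<alpha>_def by (rule Acoef_quad[OF assms])
  have "uu P a b = P * a * \<alpha>" unfolding uu_def \<alpha>_def by simp
  moreover have "(P*a*\<alpha>) * (P*a*\<alpha>) + P*a*\<alpha> + P*a*\<alpha>*a/b = P * a"
  proof -
    have "(P*a*\<alpha>) * (P*a*\<alpha>) + P*a*\<alpha> + P*a*\<alpha>*a/b = (P*a/b) * (P * a * b * \<alpha>^2 + (a + b) * \<alpha>)"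
      using assms by (simp add: field_simps power2_eq_square)
    also have "\<dots> = P * a" using q assms by simp
    finally show ?thesis .
  qed
  ultimately show ?thesis by simp
qed

lemma uu_nonneg: "P \<ge> 0 \<Longrightarrow> a \<ge> 0 \<Longrightarrow> b \<ge> 0 \<Longrightarrow> uu P a b \<ge> 0"
  unfolding uu_def using Acoef_nonneg by simp

lemma uu_le: assumes "P > 0" "a > 0" "b > 0" shows "uu P a b \<le> P * b"
proof -
  let ?x = "uu P a b"
  have x0: "?x \<ge> 0" using uu_nonneg assms by simp
  have e: "?x * ?x + ?x + ?x * a / b = P * a" by (rule uu_eq[OF assms])
  have "?x * a / b \<le> P * a" using e x0 by (smt (verit) mult_nonneg_nonneg)
  hence "?x * a \<le> P * a * b" using assms by (simp add: divide_le_eq)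
  thus ?thesis using assms by (smt (verit) mult.commute mult.left_commute mult_le_cancel_left_pos)
qed

lemma rates_equal: assumes "P > 0" "a > 0" "b > 0"
  shows "P * b * (1 - Acoef P a b) / (P * b * Acoef P a b + 1) = P * Acoef P a b * a"
proof -
  define \<alpha> where "\<alpha> = Acoef P a b"
  have q: "P * a * b * \<alpha>^2 + (a + b) * \<alpha> = b" unfolding \<alpha>_def by (rule Acoef_quad[OF assms])
  have a0: "\<alpha> \<ge> 0" unfolding \<alpha>_def using Acoef_nonneg assms by simp
  have d: "P * b * \<alpha> + 1 > 0" proof -
    have "P * b * \<alpha> \<ge> 0" using a0 assms by simp
    thus ?thesis by linarith
  qed
  have "P * b * (1 - \<alpha>) = P * \<alpha> * a * (P * b * \<alpha> + 1)"
  proof -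
    have "b * (1 - \<alpha>) = \<alpha> * a * (P * b * \<alpha> + 1)" using q by (simp add: algebra_simps power2_eq_square)
    thus ?thesis by (metis mult.assoc mult.left_commute)
  qed
  hence "P * b * (1 - \<alpha>) / (P * b * \<alpha> + 1) = P * \<alpha> * a * (P * b * \<alpha> + 1) / (P * b * \<alpha> + 1)" by (rule arg_cong[where f="\<lambda>t. t / (P * b * \<alpha> + 1)"])
  also have "\<dots> = P * \<alpha> * a" using d by simp
  finally show ?thesis unfolding \<alpha>_def .
qed

lemma step_m: assumes "P > 0" "M > 0" "m0 > 0" "m0 \<le> m1"
  shows "uu P M m1 \<le> uu P M m0 + P * (m1 - m0)"
proof -
  let ?x = "uu P M m0" and ?y = "uu P M m1"
  have m1: "m1 > 0" using assms by simp
  have ex: "?x * ?x + ?x + ?x * M / m0 = P * M" by (rule uu_eq) (use assms in auto)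
  have ey: "?y * ?y + ?y + ?y * M / m1 = P * M" by (rule uu_eq) (use assms m1 in auto)
  have x0: "?x \<ge> 0" using uu_nonneg assms by simp
  show ?thesis
  proof (cases "?y \<le> ?x")
    case True thus ?thesis using assms by (smt (verit) mult_nonneg_nonneg)
  next
    case False
    hence yx: "?y > ?x" by simp
    have "?y * ?y + ?y > ?x * ?x + ?x" using yx x0 by (smt (verit) mult_strict_mono)
    hence "?y * M / m1 < ?x * M / m0" using ex ey by linarith
    hence "?y / m1 < ?x / m0" using assms by (simp add: divide_simps mult.commute)
    hence y1: "?y < ?x * m1 / m0" using m1 assms by (simp add: field_simps)
    have "?x * M / m0 \<le> P * M" using ex x0 by (smt (verit) mult_nonneg_nonneg)
    hence "?x / m0 \<le> P" using assms by (simp add: divide_simps)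
    hence "?x * (m1 - m0) / m0 \<le> P * (m1 - m0)" using assms
      by (metis diff_ge_0_iff_ge mult.commute mult_right_mono times_divide_eq_right)
    moreover have "?x * m1 / m0 = ?x + ?x * (m1 - m0) / m0" using assms by (simp add: field_simps)
    ultimately show ?thesis using y1 by linarith
  qed
qed

lemma step_M: assumes "P > 0" "m > 0" "M0 > 0" "M0 \<le> M1"
  shows "uu P M1 m \<le> uu P M0 m + P * (M1 - M0)"
proof -
  let ?y = "uu P M0 m" and ?z = "uu P M1 m"
  have M1: "M1 > 0" using assms by simp
  have ey: "?y * ?y + ?y + ?y * M0 / m = P * M0" by (rule uu_eq) (use assms in auto)
  have ez: "?z * ?z + ?z + ?z * M1 / m = P * M1" by (rule uu_eq) (use assms M1 in auto)
  have y0: "?y \<ge> 0" using uu_nonneg assms by simp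
  show ?thesis
  proof (cases "?z \<le> ?y")
    case True thus ?thesis using assms by (smt (verit) mult_nonneg_nonneg)
  next
    case False
    hence zy: "?z > ?y" by simp
    have ey': "(?y * ?y + ?y) / M0 + ?y / m = P" using ey assms by (simp add: field_simps)
    have ez': "(?z * ?z + ?z) / M1 + ?z / m = P" using ez M1 assms by (simp add: field_simps)
    have "?z / m > ?y / m" using zy assms by (simp add: divide_strict_right_mono)
    hence lt: "(?z * ?z + ?z) / M1 < (?y * ?y + ?y) / M0" using ey' ez' by linarith
    hence lt2: "(?z * ?z + ?z) * M0 < (?y * ?y + ?y) * M1" using M1 assms by (simp add: field_simps)
    have yP: "?y / M0 \<le> P"
    proof -
      have "?y / M0 \<le> (?y * ?y + ?y) / M0" using y0 assms by (simp add: divide_right_mono)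
      moreover have "?y / m \<ge> 0" using y0 assms by simp
      ultimately show ?thesis using ey' by linarith
    qed
    have "(?z - ?y) * (?z + ?y + 1) * M0 = (?z * ?z + ?z) * M0 - (?y * ?y + ?y) * M0" by (simp add: algebra_simps)
    also have "\<dots> < (?y * ?y + ?y) * (M1 - M0)" using lt2 by (simp add: algebra_simps)
    finally have A: "(?z - ?y) * (?z + ?y + 1) < (?y + 1) * (?y / M0) * (M1 - M0)"
      using assms by (simp add: field_simps)
    have "(?y + 1) * (?y / M0) * (M1 - M0) \<le> (?y + 1) * P * (M1 - M0)"
    proof -
      have k: "?y + 1 \<ge> 0" using y0 by simp
      have "(?y + 1) * (?y / M0) \<le> (?y + 1) * P"
        by (rule mult_left_mono[OF yP k])
      thus ?thesis by (rule mult_right_mono) (use assms in simp)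
    qed
    also have "\<dots> \<le> (?z + ?y + 1) * (P * (M1 - M0))"
      using zy y0 assms by (simp add: mult_right_mono)
    finally have "(?z - ?y) * (?z + ?y + 1) < (?z + ?y + 1) * (P * (M1 - M0))" using A by linarith
    moreover have "?z + ?y + 1 > 0" using zy y0 by linarith
    ultimately have "?z - ?y < P * (M1 - M0)" by (simp add: mult.commute)
    thus ?thesis by linarith
  qed
qed

lemma uu_lip: assumes "P > 0" "M0 > 0" "m0 > 0" "M0 \<le> M1" "m0 \<le> m1"
  shows "uu P M1 m1 \<le> uu P M0 m0 + P * (M1 - M0) + P * (m1 - m0)"
  using step_M[of P m1 M0 M1] step_m[of P M0 m0 m1] assms by simp



lemma qr_props: assumes "\<Delta> > 0" "T \<ge> 0" "x \<ge> 0"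
  shows "qr \<Delta> T x \<ge> 0" "qr \<Delta> T x \<le> x" "x - qr \<Delta> T x \<le> \<Delta> + max 0 (x - T * \<Delta>)"
proof -
  have fl1: "of_int \<lfloor>x / \<Delta>\<rfloor> * \<Delta> \<le> x"
    using assms of_int_floor_le[of "x/\<Delta>"] by (simp add: le_divide_eq)
  have fl2: "x < (of_int \<lfloor>x / \<Delta>\<rfloor> + 1) * \<Delta>"
  proof -
    have "x / \<Delta> < of_int \<lfloor>x / \<Delta>\<rfloor> + 1" by (rule real_of_int_floor_add_one_gt)
    hence "x / \<Delta> * \<Delta> < (of_int \<lfloor>x / \<Delta>\<rfloor> + 1) * \<Delta>" using assms(1) by (rule mult_strict_right_mono)
    thus ?thesis using assms by simp
  qed
  have fl0: "\<lfloor>x / \<Delta>\<rfloor> \<ge> 0" using assms by simp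
  show "qr \<Delta> T x \<ge> 0" unfolding qr_def using fl0 assms by simp
  show "qr \<Delta> T x \<le> x" unfolding qr_def using fl1 by simp
  show "x - qr \<Delta> T x \<le> \<Delta> + max 0 (x - T * \<Delta>)" unfolding qr_def using fl2 assms
    by (simp add: algebra_simps)
qed

lemma qr_mono: assumes "\<Delta> > 0" "T \<ge> 0" "x \<le> y"
  shows "qr \<Delta> T x \<le> qr \<Delta> T y"
proof -
  have fl1: "of_int \<lfloor>x / \<Delta>\<rfloor> * \<Delta> \<le> x"
    using assms of_int_floor_le[of "x/\<Delta>"] by (simp add: le_divide_eq)
  have "\<lfloor>x / \<Delta>\<rfloor> \<le> \<lfloor>y / \<Delta>\<rfloor>" using assms by (intro floor_mono) (simp add: divide_right_mono)
  hence "of_int \<lfloor>x / \<Delta>\<rfloor> * \<Delta> \<le> of_int \<lfloor>y / \<Delta>\<rfloor> * \<Delta>" using assms by simp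
  moreover have "x \<le> T * \<Delta> \<Longrightarrow> of_int \<lfloor>x / \<Delta>\<rfloor> * \<Delta> \<le> T * \<Delta>" using fl1 by linarith
  ultimately show ?thesis unfolding qr_def using assms by (auto split: if_splits)
qed

lemma rmax_eq: "rmax P h1 h2 = log 2 (1 + uu P (max h1 h2) (min h1 h2))"
  unfolding rmax_def uu_def by (auto simp: max_def min_def)

lemma log2_le: "x \<ge> 0 \<Longrightarrow> log 2 (1 + x) \<le> x / ln 2"
  unfolding log_def using ln_add_one_self_le_self[of x] by (simp add: divide_right_mono)

lemma rloss_eq: assumes P: "P > 0" and a: "a1 = qr \<Delta> T h1" "a2 = qr \<Delta> T h2" "a1 \<ge> 0" "a2 \<ge> 0"
  shows "rloss P \<Delta> T h1 h2 = rmax P h1 h2 -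
     (if min a1 a2 > 0 then log 2 (1 + uu P (max a1 a2) (min a1 a2)) else 0)"
proof -
  define as where "as = max a1 a2"
  define aw where "aw = min a1 a2"
  have e1: "(if a1 \<ge> a2 then a1 else a2) = as" unfolding as_def by auto
  have e2: "(if a1 \<ge> a2 then a2 else a1) = aw" unfolding aw_def by auto
  have e3: "(a1 > 0 \<and> a2 > 0) = (aw > 0)" unfolding aw_def by auto
  have r: "rloss P \<Delta> T h1 h2 = rmax P h1 h2 - min (log 2 (1 + P * (if aw > 0 then Acoef P as aw else 0) * as))
     (log 2 (1 + P * aw * (1 - (if aw > 0 then Acoef P as aw else 0)) / (P * aw * (if aw > 0 then Acoef P as aw else 0) + 1)))"
    unfolding rloss_def Let_def a(1)[symmetric] a(2)[symmetric] e1 e2 e3 ..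
  show ?thesis
  proof (cases "aw > 0")
    case True
    have asp: "as > 0" using True unfolding as_def aw_def by auto
    have re: "P * aw * (1 - Acoef P as aw) / (P * aw * Acoef P as aw + 1) = P * Acoef P as aw * as"
      by (rule rates_equal[OF P asp True])
    have u: "uu P as aw = P * Acoef P as aw * as" unfolding uu_def by (simp add: mult_ac)
    have "min (log 2 (1 + P * Acoef P as aw * as)) (log 2 (1 + P * aw * (1 - Acoef P as aw) / (P * aw * Acoef P as aw + 1)))
       = log 2 (1 + uu P as aw)" by (simp only: re u min.idem)
    hence "rloss P \<Delta> T h1 h2 = rmax P h1 h2 - log 2 (1 + uu P as aw)" using r True by (simp only: if_P)
    thus ?thesis using True by (simp only: as_def[symmetric] aw_def[symmetric] if_P)
  next
    case False
    have aw0: "aw \<ge> 0" unfolding aw_def using a by simp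
    have "P * aw \<ge> 0" using aw0 P by simp
    hence "log 2 (1 + P * aw) \<ge> 0" by simp
    hence "rloss P \<Delta> T h1 h2 = rmax P h1 h2 - 0" using r False by (simp add: min_def)
    thus ?thesis using False by (simp only: as_def[symmetric] aw_def[symmetric] if_False)
  qed
qed



lemma uu_le0: assumes "P > 0" "a \<ge> 0" "b \<ge> 0" shows "uu P a b \<le> P * b"
proof (cases "a = 0 \<or> b = 0")
  case True thus ?thesis using assms by (auto simp: uu_def Acoef_def)
next
  case False thus ?thesis using uu_le[of P a b] assms by simp
qed

lemma rloss_bounds: assumes P: "P > 0" and D: "\<Delta> > 0" and T: "T \<ge> 0" and h: "h1 \<ge> 0" "h2 \<ge> 0"
  shows "rloss P \<Delta> T h1 h2 \<le> log 2 (1 + P * (2 * \<Delta> + max 0 (h1 - T * \<Delta>) + max 0 (h2 - T * \<Delta>)))"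
    and "rloss P \<Delta> T h1 h2 \<ge> - (P * (h1 + h2) / ln 2)"
proof -
  define a1 where "a1 = qr \<Delta> T h1"
  define a2 where "a2 = qr \<Delta> T h2"
  define B where "B = 2 * \<Delta> + max 0 (h1 - T * \<Delta>) + max 0 (h2 - T * \<Delta>)"
  note q1 = qr_props[OF D T h(1), folded a1_def]
  note q2 = qr_props[OF D T h(2), folded a2_def]
  define M1 where "M1 = max h1 h2"
  define m1 where "m1 = min h1 h2"
  define M0 where "M0 = max a1 a2"
  define m0 where "m0 = min a1 a2"
  have pair: "M0 \<le> M1 \<and> m0 \<le> m1 \<and> (M1 - M0) + (m1 - m0) = (h1 - a1) + (h2 - a2)"
  proof (cases "h1 \<le> h2")
    case True
    hence "a1 \<le> a2" unfolding a1_def a2_def using qr_mono D T by blast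
    thus ?thesis using True q1 q2 unfolding M1_def m1_def M0_def m0_def by auto
  next
    case False
    hence "a2 \<le> a1" unfolding a1_def a2_def using qr_mono D T by force
    thus ?thesis using False q1 q2 unfolding M1_def m1_def M0_def m0_def by auto
  qed
  have eB: "(M1 - M0) + (m1 - m0) \<le> B" using pair q1 q2 unfolding B_def by linarith
  have B0: "B \<ge> 0" unfolding B_def using D by simp
  have re: "rloss P \<Delta> T h1 h2 = log 2 (1 + uu P M1 m1) -
     (if m0 > 0 then log 2 (1 + uu P M0 m0) else 0)"
    using rloss_eq[OF P a1_def a2_def q1(1) q2(1)] rmax_eq[of P h1 h2]
    unfolding M1_def m1_def M0_def m0_def by simp
  have M00: "M0 \<ge> 0" "m0 \<ge> 0" unfolding M0_def m0_def using q1 q2 by auto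
  have M10: "M1 \<ge> 0" "m1 \<ge> 0" unfolding M1_def m1_def using h by auto
  have u1: "uu P M1 m1 \<ge> 0" using uu_nonneg P M10 by simp
  have r0: "log 2 (1 + uu P M1 m1) \<ge> 0" using u1 by simp
  have sum0: "P * (h1 + h2) / ln 2 \<ge> 0" using P h by simp
  have PB: "P * B \<ge> 0" using P B0 by simp
  have main: "rloss P \<Delta> T h1 h2 \<le> log 2 (1 + P * B) \<and> rloss P \<Delta> T h1 h2 \<ge> - (P * (h1 + h2) / ln 2)"
  proof (cases "m0 > 0")
    case True
    have Mp: "M0 > 0" using True unfolding M0_def m0_def by auto
    have lip: "uu P M1 m1 \<le> uu P M0 m0 + P * (M1 - M0) + P * (m1 - m0)"
      using uu_lip[OF P Mp True] pair by simp
    have u0: "uu P M0 m0 \<ge> 0" using uu_nonneg P M00 by simp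
    have "P * ((M1 - M0) + (m1 - m0)) \<le> P * B" using eB P by simp
    moreover have "uu P M0 m0 * (P * B) \<ge> 0" using u0 PB by simp
    moreover have "(1 + uu P M0 m0) * (1 + P * B) = 1 + uu P M0 m0 + P * B + uu P M0 m0 * (P * B)"
      by (simp add: algebra_simps)
    ultimately have "1 + uu P M1 m1 \<le> (1 + uu P M0 m0) * (1 + P * B)" using lip
      by (simp add: algebra_simps)
    hence "log 2 (1 + uu P M1 m1) \<le> log 2 ((1 + uu P M0 m0) * (1 + P * B))"
      using u1 u0 PB by simp
    also have "\<dots> = log 2 (1 + uu P M0 m0) + log 2 (1 + P * B)"
      using u0 PB by (simp add: log_mult)
    finally have up: "rloss P \<Delta> T h1 h2 \<le> log 2 (1 + P * B)" using re True by simp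
    have "log 2 (1 + uu P M0 m0) \<le> uu P M0 m0 / ln 2" by (rule log2_le[OF u0])
    also have "\<dots> \<le> P * m0 / ln 2" using uu_le0[OF P M00] by (simp add: divide_right_mono)
    also have "\<dots> \<le> P * (h1 + h2) / ln 2" using pair M10 h P unfolding m1_def
      by (intro divide_right_mono mult_left_mono) auto
    finally have "rloss P \<Delta> T h1 h2 \<ge> - (P * (h1 + h2) / ln 2)" using re True r0 by simp
    thus ?thesis using up by simp
  next
    case False
    hence m00: "m0 = 0" using M00 by simp
    have "uu P M1 m1 \<le> P * m1" using uu_le0[OF P M10] .
    also have "\<dots> \<le> P * B" using eB m00 pair P M10 by (intro mult_left_mono) auto
    finally have "log 2 (1 + uu P M1 m1) \<le> log 2 (1 + P * B)" using u1 by simp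
    thus ?thesis using re False r0 sum0 by simp
  qed
  thus "rloss P \<Delta> T h1 h2 \<le> log 2 (1 + P * (2 * \<Delta> + max 0 (h1 - T * \<Delta>) + max 0 (h2 - T * \<Delta>)))"
    unfolding B_def by simp
  from main show "rloss P \<Delta> T h1 h2 \<ge> - (P * (h1 + h2) / ln 2)" by simp
qed



lemma tail_int:
  fixes \<mu> c :: real assumes mu: "0 < \<mu>" and c: "0 \<le> c"
  shows "has_bochner_integral (density lborel (exponential_density \<mu>)) (\<lambda>x. max 0 (x - c)) (exp (- c * \<mu>) / \<mu>)"
proof (rule has_bochner_integral_nn_integral)
  show "(\<lambda>x. max 0 (x - c)) \<in> borel_measurable (density lborel (exponential_density \<mu>))" by simp
  show "AE x in density lborel (exponential_density \<mu>). 0 \<le> max 0 (x - c)" by simp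
  show "0 \<le> exp (- c * \<mu>) / \<mu>" using mu by simp
  have pw: "ennreal (exponential_density \<mu> (c + 1 * x)) * ennreal (max 0 (c + 1 * x - c))
      = ennreal (exp (- c * \<mu>)) * ennreal (exponential_density \<mu> x * x ^ 1)" for x
  proof (cases "x < 0")
    case True thus ?thesis by (simp add: exponential_density_def)
  next
    case False
    hence eq: "exponential_density \<mu> (c + 1 * x) * max 0 (c + 1 * x - c) = exp (- c * \<mu>) * (exponential_density \<mu> x * x ^ 1)"
      using c by (simp add: exponential_density_def algebra_simps exp_add[symmetric])
    have n1: "exponential_density \<mu> x \<ge> 0" "exponential_density \<mu> (c + 1 * x) \<ge> 0"
      using mu exponential_density_nonneg by auto
    have "ennreal (exponential_density \<mu> (c + 1 * x)) * ennreal (max 0 (c + 1 * x - c))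
       = ennreal (exponential_density \<mu> (c + 1 * x) * max 0 (c + 1 * x - c))"
      using n1 by (simp add: ennreal_mult)
    also have "\<dots> = ennreal (exp (- c * \<mu>) * (exponential_density \<mu> x * x ^ 1))" using eq by simp
    also have "\<dots> = ennreal (exp (- c * \<mu>)) * ennreal (exponential_density \<mu> x * x ^ 1)"
      using n1 False by (intro ennreal_mult) auto
    finally show ?thesis .
  qed
  have "(\<integral>\<^sup>+x. ennreal (max 0 (x - c)) \<partial>density lborel (exponential_density \<mu>))
      = (\<integral>\<^sup>+x. ennreal (exponential_density \<mu> x) * ennreal (max 0 (x - c)) \<partial>lborel)"
    by (subst nn_integral_density) auto
  also have "\<dots> = (\<integral>\<^sup>+x. ennreal (exponential_density \<mu> (c + 1 * x)) * ennreal (max 0 (c + 1 * x - c)) \<partial>lborel)"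
    using nn_integral_real_affine[of "\<lambda>x. ennreal (exponential_density \<mu> x) * ennreal (max 0 (x - c))" 1 c] by simp
  also have "\<dots> = (\<integral>\<^sup>+x. ennreal (exp (- c * \<mu>)) * ennreal (exponential_density \<mu> x * x ^ 1) \<partial>lborel)"
    using pw by presburger
  also have "\<dots> = ennreal (exp (- c * \<mu>)) * (\<integral>\<^sup>+x. ennreal (exponential_density \<mu> x * x ^ 1) \<partial>lborel)"
    by (rule nn_integral_cmult) auto
  also have "\<dots> = ennreal (exp (- c * \<mu>)) * (fact (0 + 1) / (fact 0 * \<mu> ^ 1))"
    using nn_integral_erlang_ith_moment[OF mu, of 0 1] by simp
  also have "\<dots> = ennreal (exp (- c * \<mu>) / \<mu>)"
    using mu by (simp add: ennreal_mult[symmetric] divide_ennreal)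
  finally show "(\<integral>\<^sup>+x. ennreal (max 0 (x - c)) \<partial>density lborel (exponential_density \<mu>)) = ennreal (exp (- c * \<mu>) / \<mu>)" .
qed



lemma qr_meas[measurable]: "qr \<Delta> T \<in> borel_measurable borel"
  unfolding qr_def by measurable

lemma Acoef_meas[measurable]: "(\<lambda>x. Acoef P (f x) (g x)) \<in> borel_measurable M"
  if [measurable]: "f \<in> borel_measurable M" "g \<in> borel_measurable M"
  unfolding Acoef_def by measurable

lemma rmax_meas: "(\<lambda>(h1, h2). rmax P h1 h2) \<in> borel_measurable (lborel \<Otimes>\<^sub>M lborel)"
  unfolding rmax_def by measurable

lemma rloss_meas: "(\<lambda>(h1, h2). rloss P \<Delta> T h1 h2) \<in> borel_measurable (lborel \<Otimes>\<^sub>M lborel)"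
  unfolding rloss_def Let_def rmax_def by measurable



lemma ED_sf: "0 < l \<Longrightarrow> sigma_finite_measure (density lborel (exponential_density l))"
  using prob_space_exponential_density prob_space_imp_sigma_finite by blast

lemma chan_eq: assumes "l1 > 0" "l2 > 0"
  shows "chan_measure l1 l2 = density lborel (exponential_density (1/l1)) \<Otimes>\<^sub>M density lborel (exponential_density (1/l2))"
proof -
  have "density lborel (exponential_density (1/l1)) \<Otimes>\<^sub>M density lborel (exponential_density (1/l2))
     = density (lborel \<Otimes>\<^sub>M lborel) (\<lambda>(x,y). ennreal (exponential_density (1/l1) x) * ennreal (exponential_density (1/l2) y))"
    using ED_sf[of "1/l2"] assms by (intro pair_measure_density) (auto intro: lborel.sigma_finite_measure_axioms)
  also have "\<dots> = chan_measure l1 l2" unfolding chan_measure_def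
    by (intro density_cong) (auto simp: ennreal_mult exponential_density_nonneg assms)
  finally show ?thesis ..
qed

lemma marg_fst: fixes f :: "'a \<Rightarrow> real" assumes "prob_space M2" "f \<in> borel_measurable M1" "integrable M1 f"
  shows "integrable (M1 \<Otimes>\<^sub>M M2) (\<lambda>x. f (fst x))" "integral\<^sup>L (M1 \<Otimes>\<^sub>M M2) (\<lambda>x. f (fst x)) = integral\<^sup>L M1 f"
proof -
  have d: "distr (M1 \<Otimes>\<^sub>M M2) M1 fst = M1" using prob_space.distr_pair_fst[OF assms(1)] .
  show "integrable (M1 \<Otimes>\<^sub>M M2) (\<lambda>x. f (fst x))"
    using integrable_distr_eq[of fst "M1 \<Otimes>\<^sub>M M2" M1 f] assms d by simp
  show "integral\<^sup>L (M1 \<Otimes>\<^sub>M M2) (\<lambda>x. f (fst x)) = integral\<^sup>L M1 f"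
    using integral_distr[of fst "M1 \<Otimes>\<^sub>M M2" M1 f] assms d by simp
qed

lemma distr_pair_snd': assumes "prob_space M1" "sigma_finite_measure M2"
  shows "distr (M1 \<Otimes>\<^sub>M M2) M2 snd = M2"
proof (intro measure_eqI)
  interpret M2: sigma_finite_measure M2 by fact
  interpret M1: prob_space M1 by fact
  fix A assume A: "A \<in> sets (distr (M1 \<Otimes>\<^sub>M M2) M2 snd)"
  from A have "emeasure (distr (M1 \<Otimes>\<^sub>M M2) M2 snd) A = emeasure (M1 \<Otimes>\<^sub>M M2) (space M1 \<times> A)"
    by (auto simp add: emeasure_distr space_pair_measure dest: sets.sets_into_space intro!: arg_cong2[where f=emeasure])
  with A show "emeasure (distr (M1 \<Otimes>\<^sub>M M2) M2 snd) A = emeasure M2 A"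
    by (simp add: M2.emeasure_pair_measure_Times M1.emeasure_space_1)
qed simp

lemma marg_snd: fixes f :: "'a \<Rightarrow> real" assumes "prob_space M1" "sigma_finite_measure M2" "f \<in> borel_measurable M2" "integrable M2 f"
  shows "integrable (M1 \<Otimes>\<^sub>M M2) (\<lambda>x. f (snd x))" "integral\<^sup>L (M1 \<Otimes>\<^sub>M M2) (\<lambda>x. f (snd x)) = integral\<^sup>L M2 f"
proof -
  have d: "distr (M1 \<Otimes>\<^sub>M M2) M2 snd = M2" using distr_pair_snd'[OF assms(1,2)] .
  show "integrable (M1 \<Otimes>\<^sub>M M2) (\<lambda>x. f (snd x))"
    using integrable_distr_eq[of snd "M1 \<Otimes>\<^sub>M M2" M2 f] assms d by simp
  show "integral\<^sup>L (M1 \<Otimes>\<^sub>M M2) (\<lambda>x. f (snd x)) = integral\<^sup>L M2 f"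
    using integral_distr[of snd "M1 \<Otimes>\<^sub>M M2" M2 f] assms d by simp
qed

lemma AE_chan_nonneg: "AE h in chan_measure l1 l2. fst h \<ge> 0 \<and> snd h \<ge> 0"
  unfolding chan_measure_def
  by (subst AE_density) (auto simp: exponential_density_def split: if_splits intro!: AE_I2)

lemma rloss_meas_chan: "(\<lambda>(h1, h2). rloss P \<Delta> T h1 h2) \<in> borel_measurable (chan_measure l1 l2)"
  unfolding chan_measure_def using rloss_meas by simp



lemma exp_tail_le: fixes l1 l \<Delta> :: real assumes "l1 \<ge> l" "l > 0" "0 < \<Delta>" "\<Delta> \<le> 1"
  shows "exp (- (l1 * ln (1 / \<Delta>)) * (1 / l)) \<le> \<Delta>"
proof -
  have L: "ln (1 / \<Delta>) \<ge> 0" proof -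
    have "1 \<le> 1 / \<Delta>" using assms by simp
    thus ?thesis by simp
  qed
  have "l1 / l \<ge> 1" using assms by simp
  hence "(l1 / l) * ln (1 / \<Delta>) \<ge> 1 * ln (1 / \<Delta>)" using L by (intro mult_right_mono) auto
  hence "- (l1 * ln (1 / \<Delta>)) * (1 / l) \<le> ln \<Delta>" using assms by (simp add: ln_div)
  hence "exp (- (l1 * ln (1 / \<Delta>)) * (1 / l)) \<le> exp (ln \<Delta>)" by simp
  thus ?thesis using assms by simp
qed

lemma tail_bound: fixes l1 l \<Delta> :: real assumes "l1 \<ge> l" "l > 0" "0 < \<Delta>" "\<Delta> \<le> 1"
  shows "integrable (density lborel (exponential_density (1/l))) (\<lambda>x. max 0 (x - l1 * ln (1 / \<Delta>)))"
    "integral\<^sup>L (density lborel (exponential_density (1/l))) (\<lambda>x. max 0 (x - l1 * ln (1 / \<Delta>))) \<le> l * \<Delta>"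
proof -
  have L: "ln (1 / \<Delta>) \<ge> 0" proof -
    have "1 \<le> 1 / \<Delta>" using assms by simp
    thus ?thesis by simp
  qed
  have c: "l1 * ln (1 / \<Delta>) \<ge> 0" using assms L by simp
  have lp: "0 < 1 / l" using assms by simp
  note hb = tail_int[OF lp c]
  show "integrable (density lborel (exponential_density (1/l))) (\<lambda>x. max 0 (x - l1 * ln (1 / \<Delta>)))"
    by (rule integrable.intros[OF hb])
  have "integral\<^sup>L (density lborel (exponential_density (1/l))) (\<lambda>x. max 0 (x - l1 * ln (1 / \<Delta>)))
      = exp (- (l1 * ln (1 / \<Delta>)) * (1 / l)) / (1 / l)"
    using has_bochner_integral_integral_eq[OF hb] .
  also have "\<dots> = l * exp (- (l1 * ln (1 / \<Delta>)) * (1 / l))" by simp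
  also have "\<dots> \<le> l * \<Delta>" using exp_tail_le[OF assms] assms by simp
  finally show "integral\<^sup>L (density lborel (exponential_density (1/l))) (\<lambda>x. max 0 (x - l1 * ln (1 / \<Delta>))) \<le> l * \<Delta>" .
qed



lemma log2_tangent: assumes "y > 0" "z > 0" shows "log 2 y \<le> log 2 z + (y / z - 1) / ln 2"
proof -
  have "ln (y / z) \<le> y / z - 1" using assms by (intro ln_le_minus_one) simp
  hence "ln y - ln z \<le> y / z - 1" using assms by (simp add: ln_div)
  hence "(ln y - ln z) / ln 2 \<le> (y / z - 1) / ln 2" by (simp add: divide_right_mono)
  thus ?thesis unfolding log_def by (simp add: diff_divide_distrib)
qed

theorem corollary1:
  fixes l1 l2 :: real
  assumes "l1 \<ge> l2" and "l2 > 0"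
  shows "\<exists>C0 C1. C0 > 0 \<and> C1 > 0 \<and>
    (\<forall>P \<Delta>. P > 0 \<longrightarrow> 0 < \<Delta> \<longrightarrow> \<Delta> \<le> 1 \<longrightarrow>
       (let T = l1 / \<Delta> * ln (1 / \<Delta>) in
          integrable (chan_measure l1 l2) (\<lambda>(h1, h2). rloss P \<Delta> T h1 h2) \<and>
          (\<integral>(h1, h2). rloss P \<Delta> T h1 h2 \<partial>chan_measure l1 l2) \<le> log 2 (1 + C0 * P * \<Delta>) \<and>
          log 2 (1 + C0 * P * \<Delta>) \<le> C1 * P * \<Delta>))"
proof -
  have l1: "l1 > 0" using assms by linarith
  define C0 where "C0 = 2 + l1 + l2"
  have C0: "C0 > 0" using l1 assms by (simp add: C0_def)
  define C1 where "C1 = C0 / ln 2"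
  have C1: "C1 > 0" using C0 by (simp add: C1_def)
  define M1 where "M1 = density lborel (exponential_density (1/l1))"
  define M2 where "M2 = density lborel (exponential_density (1/l2))"
  have N: "chan_measure l1 l2 = M1 \<Otimes>\<^sub>M M2" using chan_eq[OF l1 assms(2)] by (simp add: M1_def M2_def)
  have p1: "prob_space M1" unfolding M1_def using l1 by (intro prob_space_exponential_density) simp
  have p2: "prob_space M2" unfolding M2_def using assms by (intro prob_space_exponential_density) simp
  have sf2: "sigma_finite_measure M2" unfolding M2_def using ED_sf assms(2) by simp
  interpret pN: prob_space "chan_measure l1 l2" unfolding N by (rule prob_space_pair[OF p1 p2])
  have main: "integrable (chan_measure l1 l2) (\<lambda>(h1, h2). rloss P \<Delta> (l1 / \<Delta> * ln (1 / \<Delta>)) h1 h2) \<and>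
          (\<integral>(h1, h2). rloss P \<Delta> (l1 / \<Delta> * ln (1 / \<Delta>)) h1 h2 \<partial>chan_measure l1 l2) \<le> log 2 (1 + C0 * P * \<Delta>) \<and>
          log 2 (1 + C0 * P * \<Delta>) \<le> C1 * P * \<Delta>"
    if P: "P > 0" and D: "0 < \<Delta>" "\<Delta> \<le> 1" for P \<Delta> :: real
  proof -
    define T where "T = l1 / \<Delta> * ln (1 / \<Delta>)"
    define c where "c = l1 * ln (1 / \<Delta>)"
    have Lg: "ln (1 / \<Delta>) \<ge> 0"
    proof -
      have "1 \<le> 1 / \<Delta>" using D by simp
      thus ?thesis by simp
    qed
    have c0: "c \<ge> 0" unfolding c_def using Lg l1 by simp
    have T0: "T \<ge> 0" unfolding T_def using Lg l1 D by simp
    have Tc: "T * \<Delta> = c" unfolding T_def c_def using D by simp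
    define \<phi> where "\<phi> = (\<lambda>x::real. max 0 (x - c))"
    have m\<phi>1: "\<phi> \<in> borel_measurable M1" unfolding \<phi>_def M1_def by simp
    have m\<phi>2: "\<phi> \<in> borel_measurable M2" unfolding \<phi>_def M2_def by simp
    note tb1 = tail_bound[of l1 l1 \<Delta>, OF order_refl l1 D, folded c_def M1_def, folded \<phi>_def]
    note tb2 = tail_bound[of l2 l1 \<Delta>, OF assms(1) assms(2) D, folded c_def M2_def, folded \<phi>_def]
    have i1: "integrable (chan_measure l1 l2) (\<lambda>h. \<phi> (fst h))" "integral\<^sup>L (chan_measure l1 l2) (\<lambda>h. \<phi> (fst h)) \<le> l1 * \<Delta>"
      using marg_fst[OF p2 m\<phi>1 tb1(1)] tb1(2) unfolding N by auto
    have i2: "integrable (chan_measure l1 l2) (\<lambda>h. \<phi> (snd h))" "integral\<^sup>L (chan_measure l1 l2) (\<lambda>h. \<phi> (snd h)) \<le> l2 * \<Delta>"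
      using marg_snd[OF p1 sf2 m\<phi>2 tb2(1)] tb2(2) unfolding N by auto
    define \<psi> where "\<psi> = (\<lambda>x::real. max 0 (x - 0))"
    have m\<psi>1: "\<psi> \<in> borel_measurable M1" unfolding \<psi>_def M1_def by simp
    have m\<psi>2: "\<psi> \<in> borel_measurable M2" unfolding \<psi>_def M2_def by simp
    have t1: "integrable M1 \<psi>" unfolding M1_def \<psi>_def using l1
      by (intro integrable.intros[OF tail_int]) auto
    have t2: "integrable M2 \<psi>" unfolding M2_def \<psi>_def using assms
      by (intro integrable.intros[OF tail_int]) auto
    have j1: "integrable (chan_measure l1 l2) (\<lambda>h. \<psi> (fst h))"
      using marg_fst[OF p2 m\<psi>1 t1] unfolding N by auto
    have j2: "integrable (chan_measure l1 l2) (\<lambda>h. \<psi> (snd h))"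
      using marg_snd[OF p1 sf2 m\<psi>2 t2] unfolding N by auto
    define Bf where "Bf = (\<lambda>h::real\<times>real. 2 * \<Delta> + \<phi> (fst h) + \<phi> (snd h))"
    have intB: "integrable (chan_measure l1 l2) Bf" unfolding Bf_def using i1 i2 by auto
    have IB: "integral\<^sup>L (chan_measure l1 l2) Bf \<le> C0 * \<Delta>"
    proof -
      have "integral\<^sup>L (chan_measure l1 l2) Bf = 2 * \<Delta> + integral\<^sup>L (chan_measure l1 l2) (\<lambda>h. \<phi> (fst h))
          + integral\<^sup>L (chan_measure l1 l2) (\<lambda>h. \<phi> (snd h))"
        unfolding Bf_def using i1 i2 by (simp add: pN.prob_space)
      also have "\<dots> \<le> 2 * \<Delta> + l1 * \<Delta> + l2 * \<Delta>" using i1 i2 by simp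
      also have "\<dots> = C0 * \<Delta>" unfolding C0_def by (simp add: algebra_simps)
      finally show ?thesis .
    qed
    define F where "F = (\<lambda>h. P / ln 2 * (Bf h + \<psi> (fst h) + \<psi> (snd h)))"
    have intF: "integrable (chan_measure l1 l2) F" unfolding F_def using intB j1 j2 by auto
    let ?R = "\<lambda>(h1, h2). rloss P \<Delta> T h1 h2"
    have measR: "?R \<in> borel_measurable (chan_measure l1 l2)" by (rule rloss_meas_chan)
    have pw: "?R h \<le> log 2 (1 + P * Bf h) \<and> ?R h \<ge> - (P * (\<psi> (fst h) + \<psi> (snd h)) / ln 2) \<and> P * Bf h \<ge> 0"
      if h: "fst h \<ge> 0" "snd h \<ge> 0" for h
    proof -
      obtain h1 h2 where hh: "h = (h1, h2)" by (cases h)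
      have B0: "Bf h \<ge> 0" unfolding Bf_def \<phi>_def using D by simp
      have "rloss P \<Delta> T h1 h2 \<le> log 2 (1 + P * (2 * \<Delta> + max 0 (h1 - T * \<Delta>) + max 0 (h2 - T * \<Delta>)))"
        using rloss_bounds(1)[OF P D(1) T0] h hh by simp
      moreover have "rloss P \<Delta> T h1 h2 \<ge> - (P * (h1 + h2) / ln 2)"
        using rloss_bounds(2)[OF P D(1) T0] h hh by simp
      ultimately show ?thesis using hh h B0 P unfolding Bf_def \<phi>_def \<psi>_def Tc by simp
    qed
    have AEb: "AE h in chan_measure l1 l2. norm (?R h) \<le> norm (F h)"
      using AE_chan_nonneg
    proof (rule AE_mp, intro AE_I2 impI)
      fix h :: "real \<times> real" assume h: "fst h \<ge> 0 \<and> snd h \<ge> 0"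
      note q = pw[OF conjunct1[OF h] conjunct2[OF h]]
      have up: "?R h \<le> P * Bf h / ln 2" using q log2_le[of "P * Bf h"] by linarith
      have Fe: "F h = P * Bf h / ln 2 + P * (\<psi> (fst h) + \<psi> (snd h)) / ln 2"
        unfolding F_def by (simp add: algebra_simps add_divide_distrib)
      have ps: "P * (\<psi> (fst h) + \<psi> (snd h)) / ln 2 \<ge> 0" unfolding \<psi>_def using P by simp
      have F0: "F h \<ge> 0" using Fe ps q by simp
      have b0: "P * Bf h / ln 2 \<ge> 0" using q by simp
      have "\<bar>?R h\<bar> \<le> F h" unfolding abs_le_iff using up q Fe ps b0 by linarith
      thus "norm (?R h) \<le> norm (F h)" using F0 by simp
    qed
    have intR: "integrable (chan_measure l1 l2) ?R" by (rule Bochner_Integration.integrable_bound[OF intF measR AEb])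
    define z where "z = 1 + C0 * P * \<Delta>"
    have z0: "z > 0" unfolding z_def using C0 P D by (simp add: add_pos_nonneg)
    define k0 where "k0 = log 2 z + (1 / z - 1) / ln 2"
    define k1 where "k1 = P / (z * ln 2)"
    have k1: "k1 \<ge> 0" unfolding k1_def using P z0 by simp
    have AEg: "AE h in chan_measure l1 l2. ?R h \<le> k0 + k1 * Bf h"
      using AE_chan_nonneg
    proof (rule AE_mp, intro AE_I2 impI)
      fix h :: "real \<times> real" assume h: "fst h \<ge> 0 \<and> snd h \<ge> 0"
      note q = pw[OF conjunct1[OF h] conjunct2[OF h]]
      have "log 2 (1 + P * Bf h) \<le> log 2 z + ((1 + P * Bf h) / z - 1) / ln 2"
        using q z0 by (intro log2_tangent) auto
      also have "\<dots> = k0 + k1 * Bf h" unfolding k0_def k1_def using z0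
        by (simp add: field_simps)
      finally show "?R h \<le> k0 + k1 * Bf h" using q by linarith
    qed
    have "integral\<^sup>L (chan_measure l1 l2) ?R \<le> integral\<^sup>L (chan_measure l1 l2) (\<lambda>h. k0 + k1 * Bf h)"
      by (rule integral_mono_AE[OF intR _ AEg]) (use intB in auto)
    also have "\<dots> = k0 + k1 * integral\<^sup>L (chan_measure l1 l2) Bf"
      using intB by (simp add: pN.prob_space)
    also have "\<dots> \<le> k0 + k1 * (C0 * \<Delta>)" using IB k1 by (simp add: mult_left_mono)
    also have "\<dots> = log 2 z" unfolding k0_def k1_def z_def using z0[unfolded z_def]
      by (simp add: field_simps)
    finally have I: "integral\<^sup>L (chan_measure l1 l2) ?R \<le> log 2 (1 + C0 * P * \<Delta>)" unfolding z_def .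
    have "log 2 (1 + C0 * P * \<Delta>) \<le> C0 * P * \<Delta> / ln 2" using C0 P D by (intro log2_le) simp
    also have "\<dots> = C1 * P * \<Delta>" unfolding C1_def by simp
    finally have L: "log 2 (1 + C0 * P * \<Delta>) \<le> C1 * P * \<Delta>" .
    show ?thesis using intR I L unfolding T_def by simp
  qed
  show ?thesis using C0 C1 main unfolding Let_def by blast
qed


end
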